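(* Let $X$ be an $n$-dimensional polyhedral normed space and let $Y \subseteq X$ be a $k$-dimensional subspace, $2 \leq k \leq n-1$, which is in general position and satisfies $\lambda(Y, X)>1$. Then every Chalmers–Metcalf operator $T=\sum_{i=1}^{l}\alpha_i x_i \otimes f_i$ for $Y$ is supported on at least $n$ pairs, i.e. $l \geq n$.
   Context: A normed space $X=(\mathbb{R}^n,\|\cdot\|)$ is polyhedral if its unit ball $B_X$ is a convex polytope; write $\mathrm{ext}\, B_X=\{x_1,\dots,x_N\}$ and $\mathrm{ext}\, B_{X^*}=\{f_1,\dots,f_M\}$ for the extreme points of the unit balls of $X$ and $X^*$. Two linear subspaces $Y,Z\subseteq\mathbb{R}^n$ are in general position if $\dim \mathrm{lin}(Y\cup Z)=\min(\dim Y+\dim Z,n)$; a subspace $Y$ is in general position if it is in general position with every subspace $\mathrm{lin}\{x_i : i\in I\}$, $I\subseteq\{1,\dots,N\}$, and every subspace $\bigcap_{i\in I}\ker f_i$, $I\subseteq\{1,\dots,M\}$. A projection onto $Y$ is a linear $P:X\to Y$ with $P|_Y=\mathrm{id}_Y$; $\lambda(Y,X)$ is the infimum of the operator norms of projections and a minimal projection is one of norm $\lambda(Y,X)$. For $x\in X$, $f\in X^*$, $x\otimes f$ is the operator $z\mapsto f(z)x$. A Chalmers–Metcalf operator for $Y$ is an operator $T=\sum_{i=1}^{l}\alpha_i x_i\otimes f_i:X\to X$ with $(x_i,f_i)\in\mathrm{ext}\,B_X\times\mathrm{ext}\,B_{X^*}$, $\alpha_i>0$, $\sum_i\alpha_i=1$,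 $T(Y)\subseteq Y$, and $f_i(P_0(x_i))=\|P_0\|=\lambda(Y,X)$ for all $i$ and some fixed minimal projection $P_0:X\to Y$. *)

theory Defs
  imports "HOL-Analysis.Analysis"
begin

text \<open>A norm on R^n given as a function (the space X = (R^n, N)).\<close>
definition is_norm :: "(real^'n \<Rightarrow> real) \<Rightarrow> bool" where
  "is_norm N \<longleftrightarrow> (\<forall>x. N x = 0 \<longleftrightarrow> x = 0) \<and> (\<forall>c x. N (c *\<^sub>R x) = \<bar>c\<bar> * N x)
     \<and> (\<forall>x y. N (x + y) \<le> N x + N y)"

definition unit_ball :: "(real^'n \<Rightarrow> real) \<Rightarrow> (real^'n) set" where
  "unit_ball N = {x. N x \<le> 1}"

definition polyhedral_norm :: "(real^'n \<Rightarrow> real) \<Rightarrow> bool" where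
  "polyhedral_norm N \<longleftrightarrow> is_norm N \<and> polytope (unit_ball N)"

text \<open>Dual unit ball: linear functionals z \<mapsto> f \<bullet> z (identified with vectors f)
  of dual norm at most 1.\<close>
definition dual_unit_ball :: "(real^'n \<Rightarrow> real) \<Rightarrow> (real^'n) set" where
  "dual_unit_ball N = {f. \<forall>x. N x \<le> 1 \<longrightarrow> f \<bullet> x \<le> 1}"

definition ext_ball :: "(real^'n \<Rightarrow> real) \<Rightarrow> (real^'n) set" where
  "ext_ball N = {x. x extreme_point_of unit_ball N}"

definition ext_dual_ball :: "(real^'n \<Rightarrow> real) \<Rightarrow> (real^'n) set" where
  "ext_dual_ball N = {f. f extreme_point_of dual_unit_ball N}"

definition op_norm :: "(real^'n \<Rightarrow> real) \<Rightarrow> (real^'n \<Rightarrow> real^'n) \<Rightarrow> real" where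
  "op_norm N P = Sup {N (P x) | x. N x \<le> 1}"

definition is_projection :: "(real^'n) set \<Rightarrow> (real^'n \<Rightarrow> real^'n) \<Rightarrow> bool" where
  "is_projection Y P \<longleftrightarrow> linear P \<and> range P \<subseteq> Y \<and> (\<forall>y\<in>Y. P y = y)"

definition proj_const :: "(real^'n \<Rightarrow> real) \<Rightarrow> (real^'n) set \<Rightarrow> real" where
  "proj_const N Y = Inf {op_norm N P | P. is_projection Y P}"

definition minimal_projection ::
  "(real^'n \<Rightarrow> real) \<Rightarrow> (real^'n) set \<Rightarrow> (real^'n \<Rightarrow> real^'n) \<Rightarrow> bool" where
  "minimal_projection N Y P \<longleftrightarrow> is_projection Y P \<and> op_norm N P = proj_const N Y"

definition general_position_pair :: "(real^'n) set \<Rightarrow> (real^'n) set \<Rightarrow> bool" where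
  "general_position_pair Y Z \<longleftrightarrow> dim (span (Y \<union> Z)) = min (dim Y + dim Z) CARD('n)"

definition in_general_position :: "(real^'n \<Rightarrow> real) \<Rightarrow> (real^'n) set \<Rightarrow> bool" where
  "in_general_position N Y \<longleftrightarrow>
     (\<forall>I \<subseteq> ext_ball N. general_position_pair Y (span I)) \<and>
     (\<forall>F \<subseteq> ext_dual_ball N. general_position_pair Y {z. \<forall>f\<in>F. f \<bullet> z = 0})"

text \<open>Chalmers--Metcalf operator T = \<Sum>i<l. \<alpha> i (x i \<otimes> f i), where (x\<otimes>f) z = (f \<bullet> z) x.\<close>
definition CM_operator ::
  "(real^'n \<Rightarrow> real) \<Rightarrow> (real^'n) set \<Rightarrow> nat \<Rightarrow> (nat \<Rightarrow> real) \<Rightarrow> (nat \<Rightarrow> real^'n)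
     \<Rightarrow> (nat \<Rightarrow> real^'n) \<Rightarrow> bool" where
  "CM_operator N Y l \<alpha> x f \<longleftrightarrow>
     (\<forall>i<l. x i \<in> ext_ball N \<and> f i \<in> ext_dual_ball N \<and> \<alpha> i > 0) \<and>
     (\<Sum>i<l. \<alpha> i) = 1 \<and>
     (\<forall>z\<in>Y. (\<Sum>i<l. (\<alpha> i * (f i \<bullet> z)) *\<^sub>R x i) \<in> Y) \<and>
     (\<exists>P0. minimal_projection N Y P0 \<and>
        (\<forall>i<l. f i \<bullet> P0 (x i) = op_norm N P0 \<and> op_norm N P0 = proj_const N Y))"

end

theory Submission
  imports Defs
begin

lemma dim_join:
  fixes S T :: "'a::euclidean_space set"
  assumes "subspace S" "subspace T"
  shows "dim (span (S \<union> T)) + dim (S \<inter> T) = dim S + dim T"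
proof -
  have "span (S \<union> T) = {x + y |x y. x \<in> S \<and> y \<in> T}"
    using assms by (simp add: span_Un span_eq_iff[THEN iffD2])
  then show ?thesis using dim_sums_Int[OF assms] by simp
qed

lemma perp_set_eq:
  fixes G :: "(real^'n) set"
  shows "{y. \<forall>x\<in>span G. orthogonal x y} = {z. \<forall>g\<in>G. g \<bullet> z = 0}"
proof (intro set_eqI iffI)
  fix z assume "z \<in> {y. \<forall>x\<in>span G. orthogonal x y}"
  then show "z \<in> {z. \<forall>g\<in>G. g \<bullet> z = 0}" by (auto simp: orthogonal_def span_base)
next
  fix z assume z: "z \<in> {z. \<forall>g\<in>G. g \<bullet> z = 0}"
  have sub: "subspace {x. x \<bullet> z = 0}" by (auto simp: subspace_def inner_add_left)
  have "span G \<subseteq> {x. x \<bullet> z = 0}" using z by (intro span_minimal[OF _ sub]) auto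
  then show "z \<in> {y. \<forall>x\<in>span G. orthogonal x y}" by (auto simp: orthogonal_def)
qed

lemma perp_dim:
  fixes G :: "(real^'n) set"
  shows "dim {z. \<forall>g\<in>G. g \<bullet> z = 0} + dim G = CARD('n)"
proof -
  have "dim {y \<in> UNIV. \<forall>x\<in>span G. orthogonal x y} + dim (span G) = dim (UNIV::(real^'n) set)"
    by (rule dim_subspace_orthogonal_to_vectors) auto
  then show ?thesis using perp_set_eq[of G] by simp
qed

lemma subspace_perp: "subspace {z::real^'n. \<forall>g\<in>G. g \<bullet> z = 0}"
  by (auto simp: subspace_def inner_add_right)

lemma trace1:
  fixes M :: "real^'n \<Rightarrow> real^'n" and x f :: "nat \<Rightarrow> real^'n"
  assumes "linear M"
  shows "(\<Sum>i<l. \<alpha> i * (f i \<bullet> M (x i))) = (\<Sum>j\<in>Basis. j \<bullet> M (\<Sum>i<l. (\<alpha> i * (f i \<bullet> j)) *\<^sub>R x i))"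
proof -
  have "(\<Sum>j\<in>Basis. j \<bullet> M (\<Sum>i<l. (\<alpha> i * (f i \<bullet> j)) *\<^sub>R x i))
      = (\<Sum>j\<in>Basis. \<Sum>i<l. \<alpha> i * ((f i \<bullet> j) * (j \<bullet> M (x i))))"
    using assms by (simp add: linear_sum linear_scale inner_sum_right mult.assoc)
  also have "\<dots> = (\<Sum>i<l. \<alpha> i * (\<Sum>j\<in>Basis. (f i \<bullet> j) * (j \<bullet> M (x i))))"
    by (subst sum.swap) (simp add: sum_distrib_left)
  also have "\<dots> = (\<Sum>i<l. \<alpha> i * (f i \<bullet> M (x i)))"
  proof -
    have "\<And>i. (\<Sum>j\<in>Basis. (f i \<bullet> j) * (j \<bullet> M (x i))) = f i \<bullet> M (x i)"
    proof -
      fix i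
      have "f i \<bullet> M (x i) = (\<Sum>j\<in>Basis. (f i \<bullet> j) *\<^sub>R j) \<bullet> M (x i)"
        by (simp add: euclidean_representation)
      also have "\<dots> = (\<Sum>j\<in>Basis. (f i \<bullet> j) * (j \<bullet> M (x i)))"
        by (simp add: inner_sum_left)
      finally show "(\<Sum>j\<in>Basis. (f i \<bullet> j) * (j \<bullet> M (x i))) = f i \<bullet> M (x i)" by simp
    qed
    then show ?thesis by simp
  qed
  finally show ?thesis by simp
qed

lemma trace2:
  fixes M :: "real^'n \<Rightarrow> real^'n" and x f :: "nat \<Rightarrow> real^'n"
  assumes "linear M"
  shows "(\<Sum>i<l. \<alpha> i * (f i \<bullet> M (x i))) = (\<Sum>j\<in>Basis. j \<bullet> (\<Sum>i<l. (\<alpha> i * (f i \<bullet> M j)) *\<^sub>R x i))"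
proof -
  have "(\<Sum>j\<in>Basis. j \<bullet> (\<Sum>i<l. (\<alpha> i * (f i \<bullet> M j)) *\<^sub>R x i))
      = (\<Sum>j\<in>Basis. \<Sum>i<l. \<alpha> i * ((x i \<bullet> j) * (f i \<bullet> M j)))"
    by (simp add: inner_sum_right mult.assoc inner_commute mult.commute mult.left_commute)
  also have "\<dots> = (\<Sum>i<l. \<alpha> i * (\<Sum>j\<in>Basis. (x i \<bullet> j) * (f i \<bullet> M j)))"
    by (subst sum.swap) (simp add: sum_distrib_left)
  also have "\<dots> = (\<Sum>i<l. \<alpha> i * (f i \<bullet> M (x i)))"
  proof -
    have "\<And>i. (\<Sum>j\<in>Basis. (x i \<bullet> j) * (f i \<bullet> M j)) = f i \<bullet> M (x i)"
    proof -
      fix i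
      have "M (x i) = M (\<Sum>j\<in>Basis. (x i \<bullet> j) *\<^sub>R j)"
        by (simp add: euclidean_representation)
      also have "\<dots> = (\<Sum>j\<in>Basis. (x i \<bullet> j) *\<^sub>R M j)"
        using assms by (simp add: linear_sum linear_scale)
      finally show "(\<Sum>j\<in>Basis. (x i \<bullet> j) * (f i \<bullet> M j)) = f i \<bullet> M (x i)"
        by (simp add: inner_sum_right)
    qed
    then show ?thesis by simp
  qed
  finally show ?thesis by simp
qed


theorem mainTheorem8:
  fixes N :: "real^'n \<Rightarrow> real" and Y :: "(real^'n) set"
    and l :: nat and \<alpha> :: "nat \<Rightarrow> real" and x f :: "nat \<Rightarrow> real^'n"
  assumes "polyhedral_norm N"
    and "subspace Y"
    and "2 \<le> dim Y" and "dim Y \<le> CARD('n) - 1"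
    and "in_general_position N Y"
    and "proj_const N Y > 1"
    and "CM_operator N Y l \<alpha> x f"
  shows "l \<ge> CARD('n)"
proof (rule ccontr)
  assume "\<not> l \<ge> CARD('n)"
  then have ll: "l < CARD('n)" by simp
  define k where "k = dim Y"
  define n where "n = CARD('n)"
  have kn: "k \<le> n" using assms(4) by (simp add: k_def n_def)
  have sY: "subspace Y" by fact
  obtain P0 where cm1: "\<forall>i<l. x i \<in> ext_ball N \<and> f i \<in> ext_dual_ball N \<and> \<alpha> i > 0"
    and cm2: "(\<Sum>i<l. \<alpha> i) = 1"
    and cm3: "\<forall>z\<in>Y. (\<Sum>i<l. (\<alpha> i * (f i \<bullet> z)) *\<^sub>R x i) \<in> Y"
    and mp: "minimal_projection N Y P0"
    and act: "\<forall>i<l. f i \<bullet> P0 (x i) = op_norm N P0"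
    using assms(7) unfolding CM_operator_def by blast
  define lam where "lam = op_norm N P0"
  have lam1: "lam > 1" using mp assms(6) by (simp add: lam_def minimal_projection_def)
  have linP0: "linear P0" and rP0: "\<And>z. P0 z \<in> Y" and idP0: "\<And>y. y\<in>Y \<Longrightarrow> P0 y = y"
    using mp by (auto simp: minimal_projection_def is_projection_def)
  have fx1: "\<forall>i<l. f i \<bullet> x i \<le> 1"
  proof (intro allI impI)
    fix i assume "i<l"
    then have "x i \<in> unit_ball N" "f i \<in> dual_unit_ball N" using cm1
      by (auto simp: ext_ball_def ext_dual_ball_def extreme_point_of_def)
    then show "f i \<bullet> x i \<le> 1" by (auto simp: unit_ball_def dual_unit_ball_def)
  qed
  define T where "T = (\<lambda>z. \<Sum>i<l. (\<alpha> i * (f i \<bullet> z)) *\<^sub>R x i)"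
  have linT: "linear T"
    unfolding T_def
    by (rule linearI) (simp_all add: inner_add_right algebra_simps sum.distrib scaleR_sum_right)
  have TY: "\<And>z. z\<in>Y \<Longrightarrow> T z \<in> Y" using cm3 T_def by simp
  have sumlam: "(\<Sum>i<l. \<alpha> i * (f i \<bullet> P0 (x i))) = lam"
  proof -
    have "(\<Sum>i<l. \<alpha> i * (f i \<bullet> P0 (x i))) = (\<Sum>i<l. \<alpha> i * lam)"
      using act by (intro sum.cong) (auto simp: lam_def)
    also have "\<dots> = lam" using cm2 by (simp add: sum_distrib_right[symmetric])
    finally show ?thesis .
  qed
  define xs where "xs = x ` {..<l}"
  define fs where "fs = f ` {..<l}"
  define ZF where "ZF = {z. \<forall>g\<in>fs. g \<bullet> z = 0}"
  have xs_ext: "xs \<subseteq> ext_ball N" using cm1 by (auto simp: xs_def)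
  have fs_ext: "fs \<subseteq> ext_dual_ball N" using cm1 by (auto simp: fs_def)
  have GP1: "\<And>I. I \<subseteq> ext_ball N \<Longrightarrow> dim (span (Y \<union> span I)) = min (k + dim I) n"
    using assms(5) by (simp add: in_general_position_def general_position_pair_def k_def n_def)
  have GP2: "\<And>F. F \<subseteq> ext_dual_ball N \<Longrightarrow>
      dim (span (Y \<union> {z. \<forall>f\<in>F. f \<bullet> z = 0})) = min (k + dim {z. \<forall>f\<in>F. f \<bullet> z = 0}) n"
    using assms(5) by (simp add: in_general_position_def general_position_pair_def k_def n_def)
  have Tspan: "\<And>z. T z \<in> span xs"
    unfolding T_def xs_def by (intro span_sum span_scale span_base) auto
  have TZF: "\<And>z. z \<in> ZF \<Longrightarrow> T z = 0"
    unfolding T_def ZF_def fs_def by simp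
  show False
  proof (cases "dim xs < n - k")
    case True
    have "dim (span (Y \<union> span xs)) = k + dim xs" using GP1[OF xs_ext] True by simp
    moreover have "dim (span (Y \<union> span xs)) + dim (Y \<inter> span xs) = k + dim xs"
      using dim_join[OF sY subspace_span[of xs]] by (simp add: k_def)
    ultimately have "Y \<inter> span xs \<subseteq> {0}" by simp
    then have T0: "\<And>y. y \<in> Y \<Longrightarrow> T y = 0" using TY Tspan by blast
    have "lam = (\<Sum>j\<in>Basis. j \<bullet> T (P0 j))"
      using trace2[OF linP0, where l=l and \<alpha>=\<alpha> and f=f and x=x] sumlam by (simp add: T_def)
    also have "\<dots> = 0" using T0 rP0 by simp
    finally show False using lam1 by simp
  next
    case False
    then have xsbig: "n - k \<le> dim xs" by simp
    show False
    proof (cases "dim ZF > n - k")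
      case True
      have "dim (span (Y \<union> ZF)) = n" using GP2[OF fs_ext] True kn by (simp add: ZF_def)
      then have full: "span (Y \<union> ZF) = UNIV" using dim_eq_full[of "Y \<union> ZF"] by (simp add: n_def)
      have Tall: "\<And>z. T z \<in> Y"
      proof -
        fix z
        have "z \<in> span (Y \<union> ZF)" using full by simp
        then obtain a b where ab: "z = a + b" "a \<in> span Y" "b \<in> span ZF"
          by (auto simp: span_Un)
        have "a \<in> Y" using ab sY by (simp add: span_eq_iff[THEN iffD2])
        moreover have "b \<in> ZF" using ab subspace_perp[of fs] by (simp add: ZF_def span_eq_iff[THEN iffD2])
        ultimately show "T z \<in> Y" using ab TY TZF linear_add[OF linT] by simp
      qed
      have "lam = (\<Sum>j\<in>Basis. j \<bullet> P0 (T j))"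
        using trace1[OF linP0, where l=l and \<alpha>=\<alpha> and f=f and x=x] sumlam by (simp add: T_def)
      also have "\<dots> = (\<Sum>j\<in>Basis. j \<bullet> T j)" using Tall idP0 by simp
      also have "\<dots> = (\<Sum>i<l. \<alpha> i * (f i \<bullet> x i))"
        using trace1[OF linear_id, where l=l and \<alpha>=\<alpha> and f=f and x=x] by (simp add: T_def id_def)
      also have "\<dots> \<le> (\<Sum>i<l. \<alpha> i * 1)"
        using fx1 cm1 by (intro sum_mono mult_left_mono) auto
      also have "\<dots> = 1" using cm2 by simp
      finally show False using lam1 by simp
    next
      case False
      have "dim (span (Y \<union> ZF)) = k + dim ZF" using GP2[OF fs_ext] False kn by (simp add: ZF_def)
      moreover have "dim (span (Y \<union> ZF)) + dim (Y \<inter> ZF) = k + dim ZF"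
        using dim_join[OF sY subspace_perp[of fs]] by (simp add: k_def ZF_def)
      ultimately have YZF: "Y \<inter> ZF \<subseteq> {0}" by simp
      obtain B where B: "B \<subseteq> xs" "independent B" "xs \<subseteq> span B" "card B = dim xs"
        using basis_exists by blast
      have finB: "finite B" using B(2) finiteI_independent by blast
      obtain C where C: "C \<subseteq> B" "card C = n - k"
        using obtain_subset_with_card_n[of "n - k" B] xsbig B(4) by auto
      have indC: "independent C" using B(2) C(1) independent_mono by blast
      have finC: "finite C" using finB C(1) finite_subset by blast
      have Cext: "C \<subseteq> ext_ball N" using C(1) B(1) xs_ext by blast
      have "dim (span (Y \<union> span C)) = n"
        using GP1[OF Cext] dim_eq_card_independent[OF indC] C(2) kn by simp
      moreover have "dim (span (Y \<union> span C)) + dim (Y \<inter> span C) = k + dim C"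
        using dim_join[OF sY subspace_span[of C]] by (simp add: k_def)
      ultimately have YC: "Y \<inter> span C \<subseteq> {0}"
        using dim_eq_card_independent[OF indC] C(2) kn by simp
      define idx where "idx c = (SOME i. i < l \<and> x i = c)" for c
      have idx: "idx c < l \<and> x (idx c) = c" if "c \<in> C" for c
      proof -
        have "\<exists>i. i < l \<and> x i = c" using that C(1) B(1) by (auto simp: xs_def)
        then show ?thesis unfolding idx_def by (rule someI_ex)
      qed
      have injidx: "inj_on idx C" by (metis idx inj_onI)
      define J where "J = idx ` C"
      have cardJ: "card J = n - k" using card_image[OF injidx] C(2) by (simp add: J_def)
      have Jl: "J \<subseteq> {..<l}" using idx by (auto simp: J_def)
      define G where "G = f ` ({..<l} - J)"
      have "card G \<le> card ({..<l} - J)" unfolding G_def by (rule card_image_le) simp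
      also have "\<dots> = l - (n - k)" using Jl cardJ by (simp add: card_Diff_subset finite_subset)
      finally have cardG: "card G \<le> l - (n - k)" .
      have "dim G \<le> card G" by (rule dim_le_card) (auto simp: G_def span_base)
      moreover have "l - (n - k) < k"
      proof -
        have "2 \<le> k" using assms(3) by (simp add: k_def)
        moreover have "l < n" using ll by (simp add: n_def)
        ultimately show ?thesis using kn by linarith
      qed
      ultimately have dimG: "dim G < k" using cardG by linarith
      define W where "W = {z. \<forall>g\<in>G. g \<bullet> z = 0}"
      have dW: "dim W + dim G = n" using perp_dim[of G] by (simp add: W_def n_def)
      have "dim (span (Y \<union> W)) + dim (Y \<inter> W) = k + dim W"
        using dim_join[OF sY subspace_perp[of G]] by (simp add: k_def W_def)
      moreover have "dim (span (Y \<union> W)) \<le> n"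
        using dim_subset_UNIV[of "span (Y \<union> W)"] by (simp add: n_def)
      ultimately have "dim (Y \<inter> W) > 0" using dW dimG by linarith
      then obtain y where y: "y \<in> Y" "y \<in> W" "y \<noteq> 0"
      proof -
        have "\<not> (Y \<inter> W \<subseteq> {0})" using \<open>dim (Y \<inter> W) > 0\<close> dim_eq_0 by (metis not_gr_zero)
        then show ?thesis using that by blast
      qed
      have "T y = (\<Sum>i\<in>J. (\<alpha> i * (f i \<bullet> y)) *\<^sub>R x i)"
        unfolding T_def
      proof (rule sum.mono_neutral_right)
        show "\<forall>i\<in>{..<l} - J. (\<alpha> i * (f i \<bullet> y)) *\<^sub>R x i = 0"
          using y(2) by (auto simp: W_def G_def)
      qed (use Jl in blast)+
      also have "\<dots> = (\<Sum>c\<in>C. (\<alpha> (idx c) * (f (idx c) \<bullet> y)) *\<^sub>R c)"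
        unfolding J_def
      proof -
        have "(\<Sum>i\<in>idx ` C. (\<alpha> i * (f i \<bullet> y)) *\<^sub>R x i)
            = (\<Sum>c\<in>C. (\<alpha> (idx c) * (f (idx c) \<bullet> y)) *\<^sub>R x (idx c))"
          using sum.reindex[OF injidx, of "\<lambda>i. (\<alpha> i * (f i \<bullet> y)) *\<^sub>R x i"] by (simp add: comp_def)
        also have "\<dots> = (\<Sum>c\<in>C. (\<alpha> (idx c) * (f (idx c) \<bullet> y)) *\<^sub>R c)"
          using idx by (intro sum.cong) auto
        finally show "(\<Sum>i\<in>idx ` C. (\<alpha> i * (f i \<bullet> y)) *\<^sub>R x i) = (\<Sum>c\<in>C. (\<alpha> (idx c) * (f (idx c) \<bullet> y)) *\<^sub>R c)" .
      qed
      finally have Ty: "T y = (\<Sum>c\<in>C. (\<alpha> (idx c) * (f (idx c) \<bullet> y)) *\<^sub>R c)" .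
      have "T y \<in> span C" unfolding Ty by (intro span_sum span_scale span_base) auto
      then have "T y = 0" using YC TY[OF y(1)] by blast
      then have sum0: "(\<Sum>c\<in>C. (\<alpha> (idx c) * (f (idx c) \<bullet> y)) *\<^sub>R c) = 0"
        using Ty by simp
      have indE: "\<forall>u. (\<Sum>v\<in>C. u v *\<^sub>R v) = 0 \<longrightarrow> (\<forall>v\<in>C. u v = 0)"
        using indC independent_explicit[of C] by blast
      have "\<forall>c\<in>C. \<alpha> (idx c) * (f (idx c) \<bullet> y) = 0"
        using spec[OF indE, of "\<lambda>c. \<alpha> (idx c) * (f (idx c) \<bullet> y)"] sum0 by simp
      then have fJ: "\<forall>c\<in>C. f (idx c) \<bullet> y = 0" using idx cm1 by fastforce
      have "y \<in> ZF"
      proof -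
        have "f i \<bullet> y = 0" if "i < l" for i
        proof (cases "i \<in> J")
          case True then show ?thesis using fJ by (auto simp: J_def)
        next
          case False then show ?thesis using y(2) that by (auto simp: W_def G_def)
        qed
        then show ?thesis by (auto simp: ZF_def fs_def)
      qed
      then show False using YZF y by blast
    qed
  qed
qed

end
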